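(* Let $n$ be a nonnegative integer and $a,c\in\mathbb{C}$ such that all series and quotients below are defined (no lower parameter zero or a negative integer). Then \[ {}_3F_2\!\left(\left.{-n,\frac{a}{2},\frac{a+1}{2} \atop a,c}\right| 4\right) =\frac{(-1)^n(1+a-c)_n}{(c)_n}\,{}_3F_2\!\left(\left.{-\frac{n}{2},\frac{1-n}{2},1-c-n \atop c-a-n,1+a-c}\right| 4\right). \]
   Context: For $a\in\mathbb{C}$, $(a)_0=1$ and $(a)_k=a(a+1)\cdots(a+k-1)$ for $k\ge1$. The hypergeometric series is ${}_rF_s\!\left(\left.{\alpha_1,\ldots,\alpha_r\atop \beta_1,\ldots,\beta_s}\right|z\right)=\sum_{k\ge0}\frac{(\alpha_1)_k\cdots(\alpha_r)_k}{k!(\beta_1)_k\cdots(\beta_s)_k}z^k$, with no lower parameter zero or a negative integer. Since one of $-\frac n2,\frac{1-n}{2}$ is a nonpositive integer, the right-hand series terminates. *)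

theory Defs
  imports "HOL-Analysis.Analysis"
begin

definition hypergeom :: "complex list \<Rightarrow> complex list \<Rightarrow> complex \<Rightarrow> complex" where
  "hypergeom as bs z =
     (\<Sum>k. (\<Prod>a\<leftarrow>as. pochhammer a k) / (fact k * (\<Prod>b\<leftarrow>bs. pochhammer b k)) * z ^ k)"

end

theory Submission
  imports Defs "HOL-Computational_Algebra.Formal_Power_Series"
begin

lemma double_sum_reindex:
  fixes f :: "nat \<Rightarrow> nat \<Rightarrow> 'a::comm_monoid_add"
  assumes z: "\<And>m j. m < j \<Longrightarrow> f m j = 0"
  shows "(\<Sum>m\<in>{0..n}. \<Sum>j\<in>{0..n-m}. f m j) = (\<Sum>j\<in>{0..n div 2}. \<Sum>i\<in>{0..n-2*j}. f (i+j) j)"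
proof -
  let ?S1 = "Sigma {0..n} (\<lambda>m. {0..n-m})"
  let ?S2 = "Sigma {0..n div 2} (\<lambda>j. {0..n-2*j})"
  let ?h = "\<lambda>p. (snd p + fst p, fst p)"
  have 1: "(\<Sum>m\<in>{0..n}. \<Sum>j\<in>{0..n-m}. f m j) = (\<Sum>(m,j)\<in>?S1. f m j)"
    by (simp add: sum.Sigma)
  have 2: "(\<Sum>j\<in>{0..n div 2}. \<Sum>i\<in>{0..n-2*j}. f (i+j) j) = (\<Sum>(j,i)\<in>?S2. f (i+j) j)"
    by (simp add: sum.Sigma)
  have inj: "inj_on ?h ?S2" by (auto simp: inj_on_def)
  have img: "?h ` ?S2 = {p \<in> ?S1. snd p \<le> fst p}"
  proof
    show "?h ` ?S2 \<subseteq> {p \<in> ?S1. snd p \<le> fst p}" by auto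
    show "{p \<in> ?S1. snd p \<le> fst p} \<subseteq> ?h ` ?S2"
    proof
      fix p assume p: "p \<in> {p \<in> ?S1. snd p \<le> fst p}"
      obtain m j where pj: "p = (m, j)" by (cases p)
      have "(j, m - j) \<in> ?S2" using p pj by auto
      moreover have "p = ?h (j, m - j)" using p pj by auto
      ultimately show "p \<in> ?h ` ?S2" by blast
    qed
  qed
  have "(\<Sum>(j,i)\<in>?S2. f (i+j) j) = (\<Sum>p\<in>?S2. (\<lambda>(m,j). f m j) (?h p))"
    by (rule sum.cong) auto
  also have "\<dots> = (\<Sum>p\<in>?h ` ?S2. (\<lambda>(m,j). f m j) p)"
    using sum.reindex[OF inj, of "\<lambda>(m,j). f m j"] by (simp add: o_def)
  also have "\<dots> = (\<Sum>(m,j)\<in>?S1. f m j)"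
    unfolding img
    by (rule sum.mono_neutral_left) (auto intro: z)
  finally show ?thesis using 1 2 by simp
qed

lemma gchoose_nat_zero: "m < j \<Longrightarrow> (of_nat m gchoose j :: complex) = 0"
  by (simp add: binomial_gbinomial[symmetric])

lemma core:
  fixes x N :: complex
  shows "(\<Sum>k\<in>{0..n}. (-1)^k * ((x + 2 * of_nat k - 1) gchoose k) * (N gchoose (n-k))) =
         (\<Sum>j\<in>{0..n div 2}. ((N - x - of_nat n - of_nat j) gchoose (n-2*j)) * (N gchoose j))"
proof -
  define f where "f m j = (N gchoose m) * (of_nat m gchoose j) * ((-x - of_nat n) gchoose (n-m-j))" for m j
  have "(\<Sum>k\<in>{0..n}. (-1)^k * ((x + 2 * of_nat k - 1) gchoose k) * (N gchoose (n-k))) =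
        (\<Sum>m\<in>{0..n}. (-1)^(n-m) * ((x + 2 * of_nat (n-m) - 1) gchoose (n-m)) * (N gchoose (n-(n-m))))"
    by (subst sum.atLeastAtMost_rev) simp
  also have "\<dots> = (\<Sum>m\<in>{0..n}. \<Sum>j\<in>{0..n-m}. f m j)"
  proof (rule sum.cong[OF refl])
    fix m assume m: "m \<in> {0..n}"
    have "(-1)^(n-m) * ((x + 2 * of_nat (n-m) - 1) gchoose (n-m)) = ((of_nat m + (-x - of_nat n)) gchoose (n-m))"
      using m by (subst gbinomial_negated_upper[of "of_nat m + (-x - of_nat n)"]) (simp add: of_nat_diff algebra_simps)
    also have "\<dots> = (\<Sum>j\<in>{0..n-m}. (of_nat m gchoose j) * ((-x - of_nat n) gchoose (n-m-j)))"
      by (rule gbinomial_Vandermonde[symmetric])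
    finally show "(-1)^(n-m) * ((x + 2 * of_nat (n-m) - 1) gchoose (n-m)) * (N gchoose (n-(n-m))) = (\<Sum>j\<in>{0..n-m}. f m j)"
      using m by (simp add: f_def sum_distrib_right sum_distrib_left algebra_simps)
  qed
  also have "\<dots> = (\<Sum>j\<in>{0..n div 2}. \<Sum>i\<in>{0..n-2*j}. f (i+j) j)"
    by (rule double_sum_reindex) (simp add: f_def gchoose_nat_zero)
  also have "\<dots> = (\<Sum>j\<in>{0..n div 2}. ((N - x - of_nat n - of_nat j) gchoose (n-2*j)) * (N gchoose j))"
  proof (rule sum.cong[OF refl])
    fix j assume j: "j \<in> {0..n div 2}"
    have "((N - x - of_nat n - of_nat j) gchoose (n-2*j)) = (((N - of_nat j) + (-x - of_nat n)) gchoose (n-2*j))"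
      by (simp add: algebra_simps)
    also have "\<dots> = (\<Sum>i\<in>{0..n-2*j}. ((N - of_nat j) gchoose i) * ((-x - of_nat n) gchoose (n-2*j-i)))"
      by (rule gbinomial_Vandermonde[symmetric])
    finally have e: "((N - x - of_nat n - of_nat j) gchoose (n-2*j)) * (N gchoose j) =
       (\<Sum>i\<in>{0..n-2*j}. (N gchoose j) * ((N - of_nat j) gchoose i) * ((-x - of_nat n) gchoose (n-2*j-i)))"
      by (simp add: sum_distrib_left sum_distrib_right mult_ac)
    show "(\<Sum>i\<in>{0..n-2*j}. f (i+j) j) = ((N - x - of_nat n - of_nat j) gchoose (n-2*j)) * (N gchoose j)"
      unfolding e
    proof (rule sum.cong[OF refl])
      fix i assume i: "i \<in> {0..n-2*j}"
      have t: "(N gchoose (i+j)) * (of_nat (i+j) gchoose j) = (N gchoose j) * ((N - of_nat j) gchoose i)"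
        using gbinomial_trinomial_revision[of j "i+j" N] by simp
      have "n - (i+j) - j = n - 2*j - i" by simp
      then show "f (i+j) j = (N gchoose j) * ((N - of_nat j) gchoose i) * ((-x - of_nat n) gchoose (n-2*j-i))"
        unfolding f_def using t by (metis mult.commute mult.left_commute)
    qed
  qed
  finally show ?thesis .
qed

lemma poch_nz: "(x::complex) \<notin> \<int>\<^sub>\<le>\<^sub>0 \<Longrightarrow> pochhammer x k \<noteq> 0"
  by (auto simp: pochhammer_eq_0_iff)

lemma alg_L:
  fixes P0 A B fk Pa Pc F4 Pcn fn s G1 G2 Pa2k Pak Pck C fnk :: complex
  assumes "F4 * (A * B) = Pa2k" "Pa2k = Pa * Pak" "Pcn = Pc * Pck" "P0 = s * (C * fk)"
    "G1 = Pak / fk" "G2 = Pck / fnk" "fn = C * fk * fnk" "Pa \<noteq> 0" "Pc \<noteq> 0" "fk \<noteq> 0" "fnk \<noteq> 0"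
  shows "P0 * (A * B) / (fk * (Pa * Pc)) * F4 * Pcn = fn * (s * G1 * G2)"
proof -
  have "P0 * (A * B) / (fk * (Pa * Pc)) * F4 * Pcn = P0 * (F4 * (A * B)) * Pcn / (fk * (Pa * Pc))"
    by (simp add: ac_simps times_divide_eq_left)
  also have "\<dots> = s * C * Pak * Pck"
    using assms(1-4,8-10) by (simp add: field_simps)
  also have "\<dots> = fn * (s * G1 * G2)"
  proof -
    have e1: "Pak = G1 * fk" using assms(5,10) by simp
    have e2: "Pck = G2 * fnk" using assms(6,11) by simp
    show ?thesis unfolding e1 e2 assms(7) by (simp add: ac_simps)
  qed
  finally show ?thesis .
qed

lemma final_step:
  fixes A B P H :: complex
  shows "A * P = B * H \<Longrightarrow> P \<noteq> 0 \<Longrightarrow> A = B / P * H"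
  by (simp add: field_simps)

lemma left_term:
  fixes a c :: complex
  assumes k: "k \<le> n" and na: "pochhammer a k \<noteq> 0" and nc: "pochhammer c k \<noteq> 0"
  shows "pochhammer (- of_nat n) k * (pochhammer (a/2) k * pochhammer ((a+1)/2) k) /
           (fact k * (pochhammer a k * pochhammer c k)) * 4^k * pochhammer c n
         = fact n * ((-1)^k * ((a + 2 * of_nat k - 1) gchoose k) * ((c + of_nat n - 1) gchoose (n-k)))"
proof -
  have d: "4^k * (pochhammer (a/2) k * pochhammer ((a+1)/2) k) = pochhammer a (2*k)"
    using pochhammer_double[of "a/2" k] by (simp add: power_mult add_divide_distrib)
  have p2: "pochhammer a (2*k) = pochhammer a k * pochhammer (a + of_nat k) k"
    using pochhammer_product'[of a k k] by (simp add: mult_2)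
  have pc: "pochhammer c n = pochhammer c k * pochhammer (c + of_nat k) (n-k)"
    by (rule pochhammer_product[OF k])
  have pm: "pochhammer (- of_nat n) k = (-1)^k * (of_nat (n choose k) * fact k :: complex)"
    using pochhammer_minus[of "of_nat n :: complex" k] gbinomial_pochhammer'[of "of_nat n :: complex" k]
    by (simp add: binomial_gbinomial)
  have g1: "(a + 2 * of_nat k - 1) gchoose k = pochhammer (a + of_nat k) k / fact k"
    by (simp add: gbinomial_pochhammer' algebra_simps)
  have g2: "(c + of_nat n - 1) gchoose (n-k) = pochhammer (c + of_nat k) (n-k) / fact (n-k)"
    using k by (simp add: gbinomial_pochhammer' of_nat_diff algebra_simps)
  have fn: "(fact n :: complex) = of_nat (n choose k) * fact k * fact (n-k)"
  proof -
    have "fact n = (of_nat (fact k * fact (n - k) * (n choose k)) :: complex)"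
      unfolding binomial_fact_lemma[OF k] by simp
    then show ?thesis by (simp add: ac_simps)
  qed
  show ?thesis
    by (rule alg_L[OF d p2 pc pm g1 g2 fn na nc]) simp_all
qed

lemma alg_R:
  fixes A B PM C F2j PC s fj Nj PD P3 Pn P1 P4 fnj G1 t G2 fn F4 :: complex
  assumes "F4*(A*B) = PM" "PM = C*F2j" "PC = s*fj*Nj" "PD = s*P3" "Pn = P1*P4*P3" "P4 = fnj*G1"
    "G1 = t*G2" "fn = C*F2j*fnj" "s * s = 1" "t * t = 1" "P1\<noteq>0" "P3\<noteq>0" "fj\<noteq>0"
  shows "t * Pn * (A*(B*PC)/(fj*(PD*P1))*F4) = fn * G2 * Nj"
proof -
  have s: "s \<noteq> 0" using assms(9) by auto
  have "t * Pn * (A*(B*PC)/(fj*(PD*P1))*F4) = t * (P1*(fnj*(t*G2))*P3) * ((F4*(A*B))*(s*fj*Nj)/(fj*((s*P3)*P1)))"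
    using assms(3-7) by (simp add: ac_simps times_divide_eq_left)
  also have "\<dots> = (t * t) * (s * s) * fnj * G2 * C*F2j*Nj / (s * s)"
    using assms(1,2,11-13) s by (simp add: field_simps)
  also have "\<dots> = fn * G2 * Nj" using assms(8-10) by simp
  finally show ?thesis .
qed

lemma right_term:
  fixes a c :: complex
  assumes j: "2 * j \<le> n" and n1: "pochhammer (c - a - of_nat n) j \<noteq> 0"
    and n2: "pochhammer (1 + a - c) j \<noteq> 0"
  shows "(-1)^n * pochhammer (1 + a - c) n *
     (pochhammer (- of_nat n / 2) j * (pochhammer ((1 - of_nat n) / 2) j * pochhammer (1 - c - of_nat n) j) /
      (fact j * (pochhammer (c - a - of_nat n) j * pochhammer (1 + a - c) j)) * 4^j)
   = fact n * (((c + of_nat n - 1) - a - of_nat n - of_nat j) gchoose (n - 2*j)) * ((c + of_nat n - 1) gchoose j)"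
proof -
  have d: "4^j * (pochhammer (- of_nat n / 2) j * pochhammer ((1 - of_nat n) / 2) j) = pochhammer (- of_nat n :: complex) (2*j)"
    using pochhammer_double[of "- of_nat n / 2 :: complex" j] by (simp add: power_mult diff_divide_distrib)
  have pm: "pochhammer (- of_nat n) (2*j) = (of_nat (n choose (2*j)) * fact (2*j) :: complex)"
    using pochhammer_minus[of "of_nat n :: complex" "2*j"] gbinomial_pochhammer'[of "of_nat n :: complex" "2*j"]
    by (simp add: binomial_gbinomial)
  have h1: "pochhammer (1 - c - of_nat n) j = (-1)^j * fact j * ((c + of_nat n - 1) gchoose j)"
    by (simp add: gbinomial_pochhammer algebra_simps)
  have h2: "pochhammer (c - a - of_nat n) j = (-1)^j * pochhammer (a - c + of_nat n - of_nat j + 1) j"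
    using pochhammer_minus[of "a - c + of_nat n" j] by simp
  have nn: "n = j + (n - 2*j) + j" using j by simp
  have h3: "pochhammer (1 + a - c) n = pochhammer (1 + a - c) j * pochhammer (1 + a - c + of_nat j) (n - 2*j)
      * pochhammer (a - c + of_nat n - of_nat j + 1) j"
  proof -
    have "pochhammer (1 + a - c) n = pochhammer (1 + a - c) (j + (n - 2*j) + j)" using nn by simp
    also have "\<dots> = pochhammer (1 + a - c) j * pochhammer (1 + a - c + of_nat j) (n - 2*j)
      * pochhammer (1 + a - c + of_nat (j + (n - 2*j))) j"
      by (simp add: pochhammer_product' mult.assoc)
    also have "1 + a - c + of_nat (j + (n - 2*j)) = a - c + of_nat n - of_nat j + 1"
      using j by (simp add: of_nat_diff algebra_simps)
    finally show ?thesis .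
  qed
  have h4: "pochhammer (1 + a - c + of_nat j) (n - 2*j) = fact (n - 2*j) * ((a - c + of_nat n - of_nat j) gchoose (n - 2*j))"
    using j by (simp add: gbinomial_pochhammer' of_nat_diff algebra_simps)
  have ev: "((-1::complex)^(n - 2*j)) = (-1)^n"
  proof -
    obtain r where r: "n = 2*j + r" using j le_Suc_ex by blast
    show ?thesis unfolding r by (simp add: power_add power_mult)
  qed
  have h5: "(a - c + of_nat n - of_nat j) gchoose (n - 2*j) = (-1)^n * (((c + of_nat n - 1) - a - of_nat n - of_nat j) gchoose (n - 2*j))"
  proof -
    have "of_nat (n - 2*j) - (a - c + of_nat n - of_nat j) - 1 = (c + of_nat n - 1) - a - of_nat n - (of_nat j :: complex)"
      using j by (simp add: of_nat_diff algebra_simps)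
    note eq = this
    have "(a - c + of_nat n - of_nat j) gchoose (n - 2*j) = (-1)^(n - 2*j) * ((of_nat (n - 2*j) - (a - c + of_nat n - of_nat j) - 1) gchoose (n - 2*j))"
      by (rule gbinomial_negated_upper)
    also have "\<dots> = (-1)^n * (((c + of_nat n - 1) - a - of_nat n - of_nat j) gchoose (n - 2*j))"
      unfolding eq ev by (rule refl)
    finally show ?thesis .
  qed
  have fn: "(fact n :: complex) = of_nat (n choose (2*j)) * fact (2*j) * fact (n-2*j)"
  proof -
    have "fact n = (of_nat (fact (2*j) * fact (n - (2*j)) * (n choose (2*j))) :: complex)"
      unfolding binomial_fact_lemma[OF j] by simp
    then show ?thesis by (simp add: ac_simps)
  qed
  have sq: "(-1::complex)^n * (-1)^n = 1" by (simp flip: power_mult_distrib)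
  have sqj: "(-1::complex)^j * (-1)^j = 1" by (simp flip: power_mult_distrib)
  have n3: "pochhammer (a - c + of_nat n - of_nat j + 1) j \<noteq> 0" using n1 h2 by auto
  show ?thesis
    by (rule alg_R[OF d pm h1 h2 h3 h4 h5 fn sqj sq n2 n3]) simp
qed


theorem mainTheorem9:
  fixes n :: nat and a c :: complex
  assumes "a \<notin> \<int>\<^sub>\<le>\<^sub>0" and "c \<notin> \<int>\<^sub>\<le>\<^sub>0"
    and "c - a - of_nat n \<notin> \<int>\<^sub>\<le>\<^sub>0" and "1 + a - c \<notin> \<int>\<^sub>\<le>\<^sub>0"
  shows "hypergeom [- of_nat n, a / 2, (a + 1) / 2] [a, c] 4 =
    (-1) ^ n * pochhammer (1 + a - c) n / pochhammer c n *
    hypergeom [- of_nat n / 2, (1 - of_nat n) / 2, 1 - c - of_nat n] [c - a - of_nat n, 1 + a - c] 4"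
proof -
  define N where "N = c + of_nat n - 1"
  have na: "\<And>k. pochhammer a k \<noteq> 0" using assms(1) by (rule poch_nz)
  have nc: "\<And>k. pochhammer c k \<noteq> 0" using assms(2) by (rule poch_nz)
  have n1: "\<And>k. pochhammer (c - a - of_nat n) k \<noteq> 0" using assms(3) by (rule poch_nz)
  have n2: "\<And>k. pochhammer (1 + a - c) k \<noteq> 0" using assms(4) by (rule poch_nz)
  define tL where "tL k = pochhammer (- of_nat n) k * (pochhammer (a/2) k * pochhammer ((a+1)/2) k) /
           (fact k * (pochhammer a k * pochhammer c k)) * 4^k" for k
  define tR where "tR j = pochhammer (- of_nat n / 2) j * (pochhammer ((1 - of_nat n) / 2) j * pochhammer (1 - c - of_nat n) j) /
      (fact j * (pochhammer (c - a - of_nat n) j * pochhammer (1 + a - c) j)) * 4^j" for j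
  have L0: "hypergeom [- of_nat n, a / 2, (a + 1) / 2] [a, c] 4 = (\<Sum>k. tL k)"
    by (simp add: hypergeom_def tL_def)
  have L: "hypergeom [- of_nat n, a / 2, (a + 1) / 2] [a, c] 4 = (\<Sum>k\<in>{0..n}. tL k)"
    unfolding L0 by (rule suminf_finite) (auto simp: tL_def pochhammer_of_nat_eq_0_iff)
  have zR: "tR j = 0" if "n < 2 * j" for j
  proof -
    have "4^j * (pochhammer (- of_nat n / 2) j * pochhammer ((1 - of_nat n) / 2) j) = pochhammer (- of_nat n :: complex) (2*j)"
      using pochhammer_double[of "- of_nat n / 2 :: complex" j] by (simp add: power_mult diff_divide_distrib)
    also have "\<dots> = 0" using that by (simp add: pochhammer_of_nat_eq_0_iff)
    finally have "pochhammer (- of_nat n / 2) j * pochhammer ((1 - of_nat n) / 2) j = (0::complex)" by simp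
    then show ?thesis unfolding tR_def by auto
  qed
  have R0: "hypergeom [- of_nat n / 2, (1 - of_nat n) / 2, 1 - c - of_nat n] [c - a - of_nat n, 1 + a - c] 4 = (\<Sum>j. tR j)"
    by (simp add: hypergeom_def tR_def)
  have R1: "hypergeom [- of_nat n / 2, (1 - of_nat n) / 2, 1 - c - of_nat n] [c - a - of_nat n, 1 + a - c] 4 = (\<Sum>j\<in>{0..n}. tR j)"
    unfolding R0 by (rule suminf_finite) (auto intro: zR)
  have R: "hypergeom [- of_nat n / 2, (1 - of_nat n) / 2, 1 - c - of_nat n] [c - a - of_nat n, 1 + a - c] 4 = (\<Sum>j\<in>{0..n div 2}. tR j)"
    unfolding R1 by (rule sum.mono_neutral_right) (auto intro: zR)
  have "hypergeom [- of_nat n, a / 2, (a + 1) / 2] [a, c] 4 * pochhammer c n = (\<Sum>k\<in>{0..n}. tL k * pochhammer c n)"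
    unfolding L by (simp add: sum_distrib_right)
  also have "\<dots> = (\<Sum>k\<in>{0..n}. fact n * ((-1)^k * ((a + 2 * of_nat k - 1) gchoose k) * (N gchoose (n-k))))"
  proof (rule sum.cong[OF refl])
    fix k assume k: "k \<in> {0..n}"
    show "tL k * pochhammer c n = fact n * ((-1)^k * ((a + 2 * of_nat k - 1) gchoose k) * (N gchoose (n-k)))"
      unfolding tL_def N_def by (rule left_term) (use k na nc in auto)
  qed
  also have "\<dots> = fact n * (\<Sum>j\<in>{0..n div 2}. ((N - a - of_nat n - of_nat j) gchoose (n-2*j)) * (N gchoose j))"
    by (simp add: sum_distrib_left[symmetric] core)
  also have "\<dots> = (\<Sum>j\<in>{0..n div 2}. (-1)^n * pochhammer (1 + a - c) n * tR j)"
    unfolding sum_distrib_left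
  proof (rule sum.cong[OF refl])
    fix j assume j: "j \<in> {0..n div 2}"
    have e: "(-1)^n * pochhammer (1 + a - c) n * tR j = fact n * ((N - a - of_nat n - of_nat j) gchoose (n-2*j)) * (N gchoose j)"
      unfolding tR_def N_def by (rule right_term) (use j n1 n2 in auto)
    show "fact n * (((N - a - of_nat n - of_nat j) gchoose (n-2*j)) * (N gchoose j)) = (-1)^n * pochhammer (1 + a - c) n * tR j"
      unfolding e by (simp only: mult.assoc)
  qed
  also have "\<dots> = (-1)^n * pochhammer (1 + a - c) n *
      hypergeom [- of_nat n / 2, (1 - of_nat n) / 2, 1 - c - of_nat n] [c - a - of_nat n, 1 + a - c] 4"
    unfolding R by (simp add: sum_distrib_left)
  finally show ?thesis using nc[of n] by (rule final_step)
qed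

end
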